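(* Let $(\mathfrak{Q},\&,e)$ be a non-trivial unital quantale. Consider the following full subcategories of $\mathfrak{Q}\text{-}\mathbf{FOrd}$: $\mathfrak{Q}\text{-}\mathbf{POrd}$ (objects with $|x|\in\{\bot,e\}$ for all $x$), $\mathfrak{Q}\text{-}\mathbf{Ord}$ (objects with $|x|=e$ for all $x$), $\mathbf{POrd}$ (objects with $|x|\in\{\bot,e\}$ and $\alpha(x,y)\in\{\bot,e\}$ for all $x,y$), and $\mathbf{Ord}$ (objects with $|x|=e$ and $\alpha(x,y)\in\{\bot,e\}$ for all $x,y$). Then all the inclusions $\mathbf{Ord}\subseteq\mathbf{POrd}\subseteq\mathfrak{Q}\text{-}\mathbf{POrd}$, $\mathbf{Ord}\subseteq\mathfrak{Q}\text{-}\mathbf{Ord}\subseteq\mathfrak{Q}\text{-}\mathbf{POrd}\subseteq\mathfrak{Q}\text{-}\mathbf{FOrd}$ are coreflective. Specifically: (1) $\mathbf{POrd}$ is a coreflective subcategory of $\mathfrak{Q}\text{-}\mathbf{POrd}$, with the coreflector sending each $(X,|\cdot|,\alpha)\in\mathfrak{Q}\text{-}\mathbf{POrd}$ to its underlying preorder, i.e. to $(X,|\cdot|,\alpha')$ where $\alpha'(x,y)=e$ if $|x|=|y|=e$ and $e\le\alpha(x,y)$, and $\alpha'(x,y)=\bot$ otherwise; similarly $\mathbf{Ord}$ is a coreflective subcategory of $\mathfrak{Q}\text{-}\mathbf{Ord}$ via the underlying preorder. (2) $\mathfrak{Q}\text{-}\mathbf{Ord}$ is a coreflective subcategory of $\mathfrak{Q}\text{-}\mathbf{POrd}$,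 with the coreflector sending $(X,|\cdot|,\alpha)$ to $X_{\{e\}}=\{x\in X\mid |x|=e\}$ with the inherited $\mathfrak{Q}$-preorder; in particular $\mathbf{Ord}$ is a coreflective subcategory of $\mathbf{POrd}$. (3) $\mathfrak{Q}\text{-}\mathbf{POrd}$ is a coreflective subcategory of $\mathfrak{Q}\text{-}\mathbf{FOrd}$, with the coreflector sending $(X,|\cdot|,\alpha)$ to $X_{\{e,\bot\}}=\{x\in X\mid |x|=e\text{ or }|x|=\bot\}$ with the inherited membership map and $\mathfrak{Q}$-preorder.
   Context: A unital quantale $(\mathfrak{Q},\&,e)$ is a complete lattice with an associative multiplication $\&$ with unit $e$ preserving arbitrary joins in each variable; non-trivial means $\bot<e$. Implications: $p\& q\le r\iff p\le r/ q\iff q\le p\backslash r$. A $\mathfrak{Q}$-subset is a set $X$ with a map $|\cdot|\colon X\to\mathfrak{Q}$. A $\mathfrak{Q}$-preorder on it is a map $\alpha\colon X\times X\to\mathfrak{Q}$ with, for all $x,y,z$: $(\alpha(x,y)/|x|)\&|x|=\alpha(x,y)=|y|\&(|y|\backslash\alpha(x,y))$; $|x|\le\alpha(x,x)$; $(\alpha(y,z)/|y|)\&\alpha(x,y)=\alpha(y,z)\&(|y|\backslash\alpha(x,y))\le\alpha(x,z)$. The underlying preorder of $(X,\alpha)$ is $x\le y\iff |x|=|y|$ and $|x|\le\alpha(x,y)$. $\mathfrak{Q}\text{-}\mathbf{FOrd}$ has as objects the $\mathfrak{Q}$-preordered $\mathfrak{Q}$-subsets and as morphisms $f\colon(X,\alpha)\to(Y,\beta)$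 the maps with $|fx|=|x|$ and $\alpha(x,x')\le\beta(fx,fx')$ for all $x,x'$. A full subcategory is coreflective if its inclusion functor has a right adjoint (the coreflector). *)

theory Defs
  imports Main
begin

definition unital_quantale :: "('q::complete_lattice \<Rightarrow> 'q \<Rightarrow> 'q) \<Rightarrow> 'q \<Rightarrow> bool" where
  "unital_quantale mult e \<longleftrightarrow>
     (\<forall>a b c. mult (mult a b) c = mult a (mult b c)) \<and>
     (\<forall>a. mult e a = a \<and> mult a e = a) \<and>
     (\<forall>a S. mult a (Sup S) = Sup ((\<lambda>s. mult a s) ` S)) \<and>
     (\<forall>a S. mult (Sup S) a = Sup ((\<lambda>s. mult s a) ` S))"

text \<open>Right implication r / q (with p & q \<le> r iff p \<le> r / q) and
left implication p \<setminus> r (with p & q \<le> r iff q \<le> p \<setminus> r).\<close>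

definition rdiv :: "('q::complete_lattice \<Rightarrow> 'q \<Rightarrow> 'q) \<Rightarrow> 'q \<Rightarrow> 'q \<Rightarrow> 'q" where
  "rdiv mult r q = Sup {p. mult p q \<le> r}"

definition ldiv :: "('q::complete_lattice \<Rightarrow> 'q \<Rightarrow> 'q) \<Rightarrow> 'q \<Rightarrow> 'q \<Rightarrow> 'q" where
  "ldiv mult p r = Sup {q. mult p q \<le> r}"

text \<open>An object: a carrier set X, a membership map |.| and a map alpha.
Only the values on the carrier are relevant.\<close>

record ('a, 'q) qset =
  qcarrier :: "'a set"
  qmem :: "'a \<Rightarrow> 'q"
  qrel :: "'a \<Rightarrow> 'a \<Rightarrow> 'q"

definition QFOrd :: "('q::complete_lattice \<Rightarrow> 'q \<Rightarrow> 'q) \<Rightarrow> 'q \<Rightarrow> ('a, 'q) qset \<Rightarrow> bool" where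
  "QFOrd mult e A \<longleftrightarrow>
     (\<forall>x\<in>qcarrier A. \<forall>y\<in>qcarrier A.
        mult (rdiv mult (qrel A x y) (qmem A x)) (qmem A x) = qrel A x y \<and>
        qrel A x y = mult (qmem A y) (ldiv mult (qmem A y) (qrel A x y))) \<and>
     (\<forall>x\<in>qcarrier A. qmem A x \<le> qrel A x x) \<and>
     (\<forall>x\<in>qcarrier A. \<forall>y\<in>qcarrier A. \<forall>z\<in>qcarrier A.
        mult (rdiv mult (qrel A y z) (qmem A y)) (qrel A x y)
          = mult (qrel A y z) (ldiv mult (qmem A y) (qrel A x y)) \<and>
        mult (qrel A y z) (ldiv mult (qmem A y) (qrel A x y)) \<le> qrel A x z)"

definition qhom :: "('a, 'q::complete_lattice) qset \<Rightarrow> ('b, 'q) qset \<Rightarrow> ('a \<Rightarrow> 'b) \<Rightarrow> bool" where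
  "qhom A B f \<longleftrightarrow>
     (\<forall>x\<in>qcarrier A. f x \<in> qcarrier B \<and> qmem B (f x) = qmem A x) \<and>
     (\<forall>x\<in>qcarrier A. \<forall>x'\<in>qcarrier A. qrel A x x' \<le> qrel B (f x) (f x'))"

definition QPOrd :: "('q::complete_lattice \<Rightarrow> 'q \<Rightarrow> 'q) \<Rightarrow> 'q \<Rightarrow> ('a, 'q) qset \<Rightarrow> bool" where
  "QPOrd mult e A \<longleftrightarrow> QFOrd mult e A \<and> (\<forall>x\<in>qcarrier A. qmem A x = bot \<or> qmem A x = e)"

definition QOrd :: "('q::complete_lattice \<Rightarrow> 'q \<Rightarrow> 'q) \<Rightarrow> 'q \<Rightarrow> ('a, 'q) qset \<Rightarrow> bool" where
  "QOrd mult e A \<longleftrightarrow> QFOrd mult e A \<and> (\<forall>x\<in>qcarrier A. qmem A x = e)"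

definition POrd :: "('q::complete_lattice \<Rightarrow> 'q \<Rightarrow> 'q) \<Rightarrow> 'q \<Rightarrow> ('a, 'q) qset \<Rightarrow> bool" where
  "POrd mult e A \<longleftrightarrow> QFOrd mult e A \<and> (\<forall>x\<in>qcarrier A. qmem A x = bot \<or> qmem A x = e) \<and>
     (\<forall>x\<in>qcarrier A. \<forall>y\<in>qcarrier A. qrel A x y = bot \<or> qrel A x y = e)"

definition Ord :: "('q::complete_lattice \<Rightarrow> 'q \<Rightarrow> 'q) \<Rightarrow> 'q \<Rightarrow> ('a, 'q) qset \<Rightarrow> bool" where
  "Ord mult e A \<longleftrightarrow> QFOrd mult e A \<and> (\<forall>x\<in>qcarrier A. qmem A x = e) \<and>
     (\<forall>x\<in>qcarrier A. \<forall>y\<in>qcarrier A. qrel A x y = bot \<or> qrel A x y = e)"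

text \<open>coreflects P P' A R eps B: P and P' are the same
subcategory predicate instantiated at the two carrier types; R lies in the full subcategory P, eps : R \<rightarrow> A is a
morphism, and B (an arbitrary object, of arbitrary type) has the universal property:
if B is in P then every morphism f : B \<rightarrow> A factors as eps \<circ> g for a unique
morphism g : B \<rightarrow> R (morphisms being identified when equal on the carrier).
Quantifying over all B (of all types) expresses that eps is a coreflection arrow
of A into P, i.e. the counit of a right adjoint to the inclusion.\<close>

definition coreflects ::
  "(('a, 'q::complete_lattice) qset \<Rightarrow> bool) \<Rightarrow> (('b, 'q) qset \<Rightarrow> bool) \<Rightarrow> ('a, 'q) qset \<Rightarrow> ('a, 'q) qset \<Rightarrow> ('a \<Rightarrow> 'a)
     \<Rightarrow> ('b, 'q) qset \<Rightarrow> bool" where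
  "coreflects P P' A R eps B \<longleftrightarrow> P R \<and> qhom R A eps \<and>
     (P' B \<longrightarrow> (\<forall>f. qhom B A f \<longrightarrow>
        (\<exists>g. qhom B R g \<and> (\<forall>x\<in>qcarrier B. eps (g x) = f x) \<and>
           (\<forall>g'. qhom B R g' \<and> (\<forall>x\<in>qcarrier B. eps (g' x) = f x) \<longrightarrow>
                 (\<forall>x\<in>qcarrier B. g' x = g x)))))"

definition underlying :: "'q \<Rightarrow> ('a, 'q::complete_lattice) qset \<Rightarrow> ('a, 'q) qset" where
  "underlying e A = A\<lparr>qrel := (\<lambda>x y. if qmem A x = e \<and> qmem A y = e \<and> e \<le> qrel A x y
                                        then e else bot)\<rparr>"

definition restrict_mem :: "'q set \<Rightarrow> ('a, 'q) qset \<Rightarrow> ('a, 'q) qset" where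
  "restrict_mem S A = A\<lparr>qcarrier := {x\<in>qcarrier A. qmem A x \<in> S}\<rparr>"

end

theory Submission
  imports Defs
begin

lemma uq_bot_right: "unital_quantale mult e \<Longrightarrow> mult a bot = bot"
  unfolding unital_quantale_def by (metis Sup_empty image_empty)

lemma uq_bot_left: "unital_quantale mult e \<Longrightarrow> mult bot a = bot"
  unfolding unital_quantale_def by (metis Sup_empty image_empty)

lemma uq_mono_right: assumes "unital_quantale mult e" "a \<le> b" shows "mult c a \<le> mult c b"
proof -
  have "mult c (Sup {a,b}) = Sup ((\<lambda>s. mult c s) ` {a,b})"
    using assms(1) unfolding unital_quantale_def by blast
  hence "mult c b = sup (mult c a) (mult c b)" using assms(2) by (simp add: sup_absorb2)
  thus ?thesis by (metis sup.cobounded1)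
qed

lemma uq_mono_left: assumes "unital_quantale mult e" "a \<le> b" shows "mult a c \<le> mult b c"
proof -
  have "mult (Sup {a,b}) c = Sup ((\<lambda>s. mult s c) ` {a,b})"
    using assms(1) unfolding unital_quantale_def by blast
  hence "mult b c = sup (mult a c) (mult b c)" using assms(2) by (simp add: sup_absorb2)
  thus ?thesis by (metis sup.cobounded1)
qed

lemma uq_unit: "unital_quantale mult e \<Longrightarrow> mult e a = a \<and> mult a e = a"
  unfolding unital_quantale_def by blast

lemma rdiv_e: assumes "unital_quantale mult e" shows "rdiv mult r e = r"
proof -
  have "{p. mult p e \<le> r} = {p. p \<le> r}" using uq_unit[OF assms] by auto
  thus ?thesis unfolding rdiv_def by (auto intro: antisym Sup_least Sup_upper)
qed

lemma ldiv_e: assumes "unital_quantale mult e" shows "ldiv mult e r = r"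
proof -
  have "{p. mult e p \<le> r} = {p. p \<le> r}" using uq_unit[OF assms] by auto
  thus ?thesis unfolding ldiv_def by (auto intro: antisym Sup_least Sup_upper)
qed

lemma rel_e_mem:
  assumes uq: "unital_quantale mult e" and be: "bot < e" and B: "QFOrd mult e B"
    and mem: "\<forall>x\<in>qcarrier B. qmem B x = bot \<or> qmem B x = e"
    and x: "x \<in> qcarrier B" and y: "y \<in> qcarrier B" and r: "e \<le> qrel B x y"
  shows "qmem B x = e \<and> qmem B y = e"
proof -
  have rne: "qrel B x y \<noteq> bot" using r be by auto
  have 1: "mult (rdiv mult (qrel B x y) (qmem B x)) (qmem B x) = qrel B x y"
   and 2: "qrel B x y = mult (qmem B y) (ldiv mult (qmem B y) (qrel B x y))"
    using B x y unfolding QFOrd_def by blast+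
  have "qmem B x \<noteq> bot" using 1 rne uq_bot_right[OF uq] by metis
  moreover have "qmem B y \<noteq> bot" using 2 rne uq_bot_left[OF uq] by metis
  ultimately show ?thesis using mem x y by blast
qed

lemma QFOrd_underlying:
  assumes uq: "unital_quantale mult e" and be: "bot < e" and A: "QFOrd mult e A"
    and mem: "\<forall>x\<in>qcarrier A. qmem A x = bot \<or> qmem A x = e"
  shows "QFOrd mult e (underlying e A)"
proof -
  let ?r = "\<lambda>x y. if qmem A x = e \<and> qmem A y = e \<and> e \<le> qrel A x y then e else bot"
  have [simp]: "qcarrier (underlying e A) = qcarrier A" "qmem (underlying e A) = qmem A"
    "qrel (underlying e A) = ?r" unfolding underlying_def by auto
  note bl = uq_bot_left[OF uq] and br = uq_bot_right[OF uq] and un = uq_unit[OF uq]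
  note rd = rdiv_e[OF uq] and ld = ldiv_e[OF uq]
  have c1: "mult (rdiv mult (?r x y) (qmem A x)) (qmem A x) = ?r x y \<and>
        ?r x y = mult (qmem A y) (ldiv mult (qmem A y) (?r x y))"
    if x: "x \<in> qcarrier A" and y: "y \<in> qcarrier A" for x y
  proof -
    have "mult (rdiv mult (?r x y) (qmem A x)) (qmem A x) = ?r x y"
      using mem x by (cases "qmem A x = e") (auto simp: rd un br)
    moreover have "?r x y = mult (qmem A y) (ldiv mult (qmem A y) (?r x y))"
      using mem y by (cases "qmem A y = e") (auto simp: ld un bl)
    ultimately show ?thesis by blast
  qed
  have c2: "qmem A x \<le> ?r x x" if x: "x \<in> qcarrier A" for x
  proof -
    have "qmem A x \<le> qrel A x x" using A x unfolding QFOrd_def by blast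
    thus ?thesis using mem x by auto
  qed
  have c3: "mult (rdiv mult (?r y z) (qmem A y)) (?r x y)
          = mult (?r y z) (ldiv mult (qmem A y) (?r x y)) \<and>
        mult (?r y z) (ldiv mult (qmem A y) (?r x y)) \<le> ?r x z"
    if x: "x \<in> qcarrier A" and y: "y \<in> qcarrier A" and z: "z \<in> qcarrier A" for x y z
  proof (cases "qmem A y = e")
    case False
    hence yb: "qmem A y = bot" using mem y by blast
    have "?r y z = bot" "?r x y = bot" using False by auto
    thus ?thesis by (simp add: bl br)
  next
    case True
    have eq: "mult (rdiv mult (?r y z) (qmem A y)) (?r x y) = mult (?r y z) (?r x y)"
      "mult (?r y z) (ldiv mult (qmem A y) (?r x y)) = mult (?r y z) (?r x y)"
      using True by (simp_all add: rd ld)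
    have le: "mult (?r y z) (?r x y) \<le> ?r x z"
    proof (cases "?r y z = e \<and> ?r x y = e")
      case True2: True
      hence h: "qmem A x = e" "qmem A z = e" "e \<le> qrel A x y" "e \<le> qrel A y z"
        using be by (auto split: if_splits)
      have "mult (qrel A y z) (ldiv mult (qmem A y) (qrel A x y)) \<le> qrel A x z"
        using A x y z unfolding QFOrd_def by blast
      hence "mult (qrel A y z) (qrel A x y) \<le> qrel A x z" using True by (simp add: ld)
      moreover have "mult e e \<le> mult (qrel A y z) (qrel A x y)"
        using uq_mono_left[OF uq h(4)] uq_mono_right[OF uq h(3)] order_trans by metis
      ultimately have "e \<le> qrel A x z" using un by (metis order_trans)
      thus ?thesis using h True2 un by auto
    next
      case False
      hence "?r y z = bot \<or> ?r x y = bot" by auto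
      thus ?thesis using bl br by auto
    qed
    show ?thesis using eq le by simp
  qed
  show ?thesis unfolding QFOrd_def
    apply (simp only: \<open>qcarrier (underlying e A) = qcarrier A\<close>
       \<open>qmem (underlying e A) = qmem A\<close> \<open>qrel (underlying e A) = ?r\<close>)
    apply (intro conjI ballI)
        apply (erule (1) c1[THEN conjunct1])
       apply (erule (1) c1[THEN conjunct2])
      apply (erule c2)
     apply (erule (2) c3[THEN conjunct1])
    apply (erule (2) c3[THEN conjunct2])
    done
qed

lemma QFOrd_restrict:
  assumes "QFOrd mult e A" shows "QFOrd mult e (restrict_mem S A)"
  using assms unfolding QFOrd_def restrict_mem_def by auto

theorem theorem3p9:
  fixes mult :: "'q::complete_lattice \<Rightarrow> 'q \<Rightarrow> 'q" and e :: 'q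
  assumes "unital_quantale mult e"
    and "bot < e"
  shows
    "(\<forall>(A::('a,'q) qset) (B::('b,'q) qset). QPOrd mult e A \<longrightarrow>
        coreflects (POrd mult e) (POrd mult e) A (underlying e A) id B) \<and>
     (\<forall>(A::('a,'q) qset) (B::('b,'q) qset). QOrd mult e A \<longrightarrow>
        coreflects (Ord mult e) (Ord mult e) A (underlying e A) id B) \<and>
     (\<forall>(A::('a,'q) qset) (B::('b,'q) qset). QPOrd mult e A \<longrightarrow>
        coreflects (QOrd mult e) (QOrd mult e) A (restrict_mem {e} A) id B) \<and>
     (\<forall>(A::('a,'q) qset) (B::('b,'q) qset). POrd mult e A \<longrightarrow>
        coreflects (Ord mult e) (Ord mult e) A (restrict_mem {e} A) id B) \<and>
     (\<forall>(A::('a,'q) qset) (B::('b,'q) qset). QFOrd mult e A \<longrightarrow>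
        coreflects (QPOrd mult e) (QPOrd mult e) A (restrict_mem {e, bot} A) id B)"
proof -
  note uq = assms(1) and be = assms(2)
  have U: "coreflects P P' A (underlying e A) id B"
    if P: "(P = POrd mult e \<and> P' = POrd mult e) \<or> (P = Ord mult e \<and> P' = Ord mult e \<and> (\<forall>x\<in>qcarrier A. qmem A x = e))" and A: "QFOrd mult e A"
      and mem: "\<forall>x\<in>qcarrier A. qmem A x = bot \<or> qmem A x = e"
    for P and P' and A :: "('a,'q) qset" and B :: "('b,'q) qset"
  proof -
    have [simp]: "qcarrier (underlying e A) = qcarrier A" "qmem (underlying e A) = qmem A"
      "qrel (underlying e A) = (\<lambda>x y. if qmem A x = e \<and> qmem A y = e \<and> e \<le> qrel A x y then e else bot)"
      unfolding underlying_def by auto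
    have R: "P (underlying e A)"
      using P QFOrd_underlying[OF uq be A mem] mem
      unfolding POrd_def Ord_def by (elim disjE) auto
    have H: "qhom (underlying e A) A id" unfolding qhom_def by auto
    have "qhom B (underlying e A) f" if PB: "P' B" and f: "qhom B A f" for f
    proof -
      have PB2: "POrd mult e B \<or> Ord mult e B" using P PB by auto
      have B: "QFOrd mult e B" and memB: "\<forall>x\<in>qcarrier B. qmem B x = bot \<or> qmem B x = e"
        and relB: "\<forall>x\<in>qcarrier B. \<forall>y\<in>qcarrier B. qrel B x y = bot \<or> qrel B x y = e"
        using PB2 unfolding POrd_def Ord_def by auto
      have "qrel B x y \<le> (if qmem A (f x) = e \<and> qmem A (f y) = e \<and> e \<le> qrel A (f x) (f y) then e else bot)"
        if x: "x \<in> qcarrier B" and y: "y \<in> qcarrier B" for x y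
      proof (cases "qrel B x y = e")
        case True
        hence "qmem B x = e \<and> qmem B y = e" using rel_e_mem[OF uq be B memB x y] by simp
        moreover have "qrel B x y \<le> qrel A (f x) (f y)" using f x y unfolding qhom_def by blast
        ultimately show ?thesis using True f x y unfolding qhom_def by auto
      next
        case False
        hence "qrel B x y = bot" using relB x y by blast
        thus ?thesis by simp
      qed
      thus ?thesis using f unfolding qhom_def by auto
    qed
    thus ?thesis unfolding coreflects_def using R H by auto
  qed
  have S: "coreflects P P' A (restrict_mem T A) id B"
    if A: "QFOrd mult e A" and PR: "P (restrict_mem T A)"
      and PB: "\<And>B::('b,'q) qset. P' B \<Longrightarrow> \<forall>x\<in>qcarrier B. qmem B x \<in> T"
    for P P' and T and A :: "('a,'q) qset" and B :: "('b,'q) qset"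
  proof -
    have H: "qhom (restrict_mem T A) A id" unfolding qhom_def restrict_mem_def by auto
    have "qhom B (restrict_mem T A) f" if P: "P' B" and f: "qhom B A f" for f
      using f PB[OF P] unfolding qhom_def restrict_mem_def by auto
    thus ?thesis unfolding coreflects_def using PR H by auto
  qed
  show ?thesis
  proof (intro conjI allI impI)
    fix A :: "('a,'q) qset" and B :: "('b,'q) qset"
    assume "QPOrd mult e A"
    thus "coreflects (POrd mult e) (POrd mult e) A (underlying e A) id B"
      unfolding QPOrd_def by (intro U) auto
  next
    fix A :: "('a,'q) qset" and B :: "('b,'q) qset"
    assume "QOrd mult e A"
    thus "coreflects (Ord mult e) (Ord mult e) A (underlying e A) id B"
      unfolding QOrd_def by (intro U) auto
  next
    fix A :: "('a,'q) qset" and B :: "('b,'q) qset"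
    assume a: "QPOrd mult e A"
    show "coreflects (QOrd mult e) (QOrd mult e) A (restrict_mem {e} A) id B"
      using a QFOrd_restrict[of mult e A "{e}"]
      by (intro S) (auto simp: QPOrd_def QOrd_def restrict_mem_def)
  next
    fix A :: "('a,'q) qset" and B :: "('b,'q) qset"
    assume a: "POrd mult e A"
    show "coreflects (Ord mult e) (Ord mult e) A (restrict_mem {e} A) id B"
      using a QFOrd_restrict[of mult e A "{e}"]
      by (intro S) (auto simp: POrd_def Ord_def restrict_mem_def)
  next
    fix A :: "('a,'q) qset" and B :: "('b,'q) qset"
    assume a: "QFOrd mult e A"
    show "coreflects (QPOrd mult e) (QPOrd mult e) A (restrict_mem {e, bot} A) id B"
      using a QFOrd_restrict[of mult e A "{e, bot}"]
      by (intro S) (auto simp: QPOrd_def restrict_mem_def)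
  qed
qed

end
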